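(* Let $|\mathcal X|$ be a prime (identify $\mathcal X$ with the field $\mathbb F_{|\mathcal X|}$), let $(X_1,Y_1),(X_2,Y_2),\dots$ be i.i.d. copies of a pair $(X,Y)$ on $\mathcal X\times\mathcal Y$, and for $k\ge1$ let $n=2^k$, $\mathbf X=X_1^n$, $\mathbf Y=Y_1^n$. Fix $\beta\in(0,1/2)$, and let $\mathcal I_0,\mathcal I_1$, $A$, $B$ and the SSC decoder $\Psi$ be as in the context. Then for every $n=2^k$, $$\Pr\big(\Psi(A\mathbf X,\mathbf Y)\neq\mathbf X\big)\le\frac{|\mathcal X|-1}{\log 2}\,n\,2^{-n^\beta}$$ (logarithm base $|\mathcal X|$), and consequently $\lim_{n\to\infty}\Pr(\Psi(A\mathbf X,\mathbf Y)\neq\mathbf X)=0$.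
   Context: Let $G\equiv\begin{pmatrix}1&0\\1&1\end{pmatrix}^{\otimes k}S_{\mathrm{BR}}$ over $\mathbb F_{|\mathcal X|}$, where $\otimes k$ is the $k$-th Kronecker power and $S_{\mathrm{BR}}$ is the $n\times n$ bit-reversal permutation matrix (sending the index with binary expansion $b_1\cdots b_k$ to the index with expansion $b_k\cdots b_1$). The extended codeword of $x\in\mathcal X^n$ is $c=T(x)\equiv S_{\mathrm{BR}}^{\top}G^{\top}x$ (an invertible linear map), and $\mathbf C=(C_1,\dots,C_n)=T(\mathbf X)$. For random variables $(U,V)$ with $U\in\mathcal X$, the source Bhattacharyya parameter is $Z(U\mid V)\equiv\frac1{|\mathcal X|-1}\sum_{u\neq u'}\sum_v\sqrt{\mu_{UV}(u,v)\mu_{UV}(u',v)}$. Define $\mathcal I_0\equiv\{i:Z(C_i\mid C_1^{i-1},\mathbf Y)\le2^{-n^\beta}\}$, $\mathcal I_1\equiv\{1,\dots,n\}\setminus\mathcal I_0$, $l=|\mathcal I_1|$; the encoder $A$ maps $x$ to the subvector of $T(x)$ on $\mathcal I_1$ (increasing order), and $B$ maps $x$ to the subvector on $\mathcal I_0$. SSC decoder: given $(u,y)\in\mathcal X^l\times\mathcal Y^n$, build $\hat c$ for $i=1,\dots,n$: entries on $\mathcal I_1$ are given by $u$, and for $i\in\mathcal I_0$, $\hat c_i$ is drawn at random according to $\mu_{C_i\mid C_1^{i-1}\mathbf Y}(\cdot\mid\hat c_1^{i-1},y)$ (fixed arbitrary distribution if the condition has probability zero); $\Psi(u,y)=T^{-1}(\hat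 c)$. *)

theory Defs
  imports "HOL-Probability.Probability"
begin

text \<open>Vectors of length n over F_q are functions nat => nat with entries in {..<q}
  at indices < n (0-based) and 0 elsewhere; matrices are functions nat => nat => nat.\<close>

definition vecs :: "nat \<Rightarrow> nat \<Rightarrow> (nat \<Rightarrow> nat) set" where
  "vecs n q = {x. \<forall>i. (i < n \<longrightarrow> x i < q) \<and> (n \<le> i \<longrightarrow> x i = 0)}"

definition matmul :: "nat \<Rightarrow> nat \<Rightarrow> (nat \<Rightarrow> nat \<Rightarrow> nat) \<Rightarrow> (nat \<Rightarrow> nat \<Rightarrow> nat) \<Rightarrow> (nat \<Rightarrow> nat \<Rightarrow> nat)" where
  "matmul q n M N = (\<lambda>i j. if i < n \<and> j < n then (\<Sum>l<n. M i l * N l j) mod q else 0)"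

definition mulvec :: "nat \<Rightarrow> nat \<Rightarrow> (nat \<Rightarrow> nat \<Rightarrow> nat) \<Rightarrow> (nat \<Rightarrow> nat) \<Rightarrow> (nat \<Rightarrow> nat)" where
  "mulvec q n M x = (\<lambda>i. if i < n then (\<Sum>j<n. M i j * x j) mod q else 0)"

definition transp :: "(nat \<Rightarrow> nat \<Rightarrow> nat) \<Rightarrow> (nat \<Rightarrow> nat \<Rightarrow> nat)" where
  "transp M = (\<lambda>i j. M j i)"

text \<open>The kernel F = [[1,0],[1,1]] and its k-th Kronecker power
  (F^{(k+1)} = F \<otimes> F^{(k)}, with (A \<otimes> B)[i,j] = A[i div m, j div m] * B[i mod m, j mod m]).\<close>

definition Fker :: "nat \<Rightarrow> nat \<Rightarrow> nat" where
  "Fker i j = (if i < 2 \<and> j < 2 \<and> j \<le> i then 1 else 0)"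

fun kronpow :: "nat \<Rightarrow> nat \<Rightarrow> nat \<Rightarrow> nat" where
  "kronpow 0 i j = (if i = 0 \<and> j = 0 then 1 else 0)"
| "kronpow (Suc k) i j = Fker (i div 2 ^ k) (j div 2 ^ k) * kronpow k (i mod 2 ^ k) (j mod 2 ^ k)"

definition bitrev :: "nat \<Rightarrow> nat \<Rightarrow> nat" where
  "bitrev k i = (\<Sum>t<k. ((i div 2 ^ t) mod 2) * 2 ^ (k - 1 - t))"

definition S_BR :: "nat \<Rightarrow> nat \<Rightarrow> nat \<Rightarrow> nat" where
  "S_BR k = (\<lambda>i j. if i < 2 ^ k \<and> j < 2 ^ k \<and> j = bitrev k i then 1 else 0)"

definition Gmat :: "nat \<Rightarrow> nat \<Rightarrow> nat \<Rightarrow> nat \<Rightarrow> nat" where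
  "Gmat q k = matmul q (2 ^ k) (kronpow k) (S_BR k)"

definition Tmap :: "nat \<Rightarrow> nat \<Rightarrow> (nat \<Rightarrow> nat) \<Rightarrow> (nat \<Rightarrow> nat)" where
  "Tmap q k x = mulvec q (2 ^ k) (transp (S_BR k)) (mulvec q (2 ^ k) (transp (Gmat q k)) x)"

definition Tinv :: "nat \<Rightarrow> nat \<Rightarrow> (nat \<Rightarrow> nat) \<Rightarrow> (nat \<Rightarrow> nat)" where
  "Tinv q k = inv_into (vecs (2 ^ k) q) (Tmap q k)"

text \<open>Joint law of (X_1^n, Y_1^n): n i.i.d. copies of p; X and Y are extended by 0 / undefined
  outside the index range.\<close>

definition XYn :: "(nat \<times> 'y) pmf \<Rightarrow> nat \<Rightarrow> ((nat \<Rightarrow> nat) \<times> (nat \<Rightarrow> 'y)) pmf" where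
  "XYn p n = map_pmf (\<lambda>f. (\<lambda>i. if i < n then fst (f i) else 0, \<lambda>i. snd (f i)))
      (Pi_pmf {..<n} undefined (\<lambda>_. p))"

definition restr :: "nat \<Rightarrow> (nat \<Rightarrow> nat) \<Rightarrow> (nat \<Rightarrow> nat)" where
  "restr i c = (\<lambda>j. if j < i then c j else 0)"

text \<open>Joint law of (C_i, (C_1^{i-1}, Y)), with 0-based index i (C_1^{i-1} is C restricted to {..<i}).\<close>

definition CiV :: "nat \<Rightarrow> (nat \<times> 'y) pmf \<Rightarrow> nat \<Rightarrow> nat \<Rightarrow> (nat \<times> ((nat \<Rightarrow> nat) \<times> (nat \<Rightarrow> 'y))) pmf" where
  "CiV q p k i = map_pmf (\<lambda>(x, y). let c = Tmap q k x in (c i, (restr i c, y))) (XYn p (2 ^ k))"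

definition Zbhat :: "nat \<Rightarrow> (nat \<times> 'v) pmf \<Rightarrow> real" where
  "Zbhat q M = 1 / (real q - 1) * (\<Sum>u<q. \<Sum>u'\<in>{..<q} - {u}.
       infsum (\<lambda>v. sqrt (pmf M (u, v) * pmf M (u', v))) UNIV)"

definition I0 :: "nat \<Rightarrow> (nat \<times> 'y) pmf \<Rightarrow> nat \<Rightarrow> real \<Rightarrow> nat set" where
  "I0 q p k \<beta> = {i. i < 2 ^ k \<and> Zbhat q (CiV q p k i) \<le> 2 powr (- (real (2 ^ k) powr \<beta>))}"

definition I1 :: "nat \<Rightarrow> (nat \<times> 'y) pmf \<Rightarrow> nat \<Rightarrow> real \<Rightarrow> nat set" where
  "I1 q p k \<beta> = {..<2 ^ k} - I0 q p k \<beta>"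

definition encA :: "nat \<Rightarrow> (nat \<times> 'y) pmf \<Rightarrow> nat \<Rightarrow> real \<Rightarrow> (nat \<Rightarrow> nat) \<Rightarrow> nat list" where
  "encA q p k \<beta> x = map (Tmap q k x) (sorted_list_of_set (I1 q p k \<beta>))"

definition condC :: "nat \<Rightarrow> (nat \<times> 'y) pmf \<Rightarrow> nat \<Rightarrow> nat pmf \<Rightarrow> nat \<Rightarrow> (nat \<Rightarrow> nat) \<Rightarrow> (nat \<Rightarrow> 'y) \<Rightarrow> nat pmf" where
  "condC q p k d i c y =
     (let J = CiV q p k i; E = {z. snd z = (restr i c, y)} in
      if measure_pmf.prob J E = 0 then d else map_pmf fst (cond_pmf J E))"

fun sscdec :: "nat \<Rightarrow> (nat \<times> 'y) pmf \<Rightarrow> nat \<Rightarrow> real \<Rightarrow> nat pmf \<Rightarrow> nat list \<Rightarrow> (nat \<Rightarrow> 'y) \<Rightarrow> nat \<Rightarrow> (nat \<Rightarrow> nat) pmf" where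
  "sscdec q p k \<beta> d u y 0 = return_pmf (\<lambda>_. 0)"
| "sscdec q p k \<beta> d u y (Suc i) =
     bind_pmf (sscdec q p k \<beta> d u y i) (\<lambda>c.
       map_pmf (\<lambda>ci. c(i := ci))
         (if i \<in> I1 q p k \<beta> then return_pmf (u ! card {j \<in> I1 q p k \<beta>. j < i})
          else condC q p k d i c y))"

definition Psi :: "nat \<Rightarrow> (nat \<times> 'y) pmf \<Rightarrow> nat \<Rightarrow> real \<Rightarrow> nat pmf \<Rightarrow> nat list \<Rightarrow> (nat \<Rightarrow> 'y) \<Rightarrow> (nat \<Rightarrow> nat) pmf" where
  "Psi q p k \<beta> d u y = map_pmf (Tinv q k) (sscdec q p k \<beta> d u y (2 ^ k))"

definition Perr :: "nat \<Rightarrow> (nat \<times> 'y) pmf \<Rightarrow> nat \<Rightarrow> real \<Rightarrow> nat pmf \<Rightarrow> real" where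
  "Perr q p k \<beta> d = measure_pmf.prob
     (bind_pmf (XYn p (2 ^ k)) (\<lambda>(x, y).
        map_pmf (\<lambda>xh. (x, xh)) (Psi q p k \<beta> d (encA q p k \<beta> x) y)))
     {(x, xh). xh \<noteq> x}"

end

theory Submission
  imports Defs "HOL-Real_Asymp.Real_Asymp"
begin


lemma bitrev_Suc: "bitrev (Suc k) i = (i mod 2) * 2 ^ k + bitrev k (i div 2)"
proof -
  have "bitrev (Suc k) i = (\<Sum>t<Suc k. ((i div 2 ^ t) mod 2) * 2 ^ (Suc k - 1 - t))"
    by (simp add: bitrev_def)
  also have "\<dots> = (\<Sum>t<k. ((i div 2 ^ Suc t) mod 2) * 2 ^ (Suc k - 1 - Suc t)) + (i mod 2) * 2 ^ k"
    by (subst sum.lessThan_Suc_shift) simp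
  also have "(\<Sum>t<k. ((i div 2 ^ Suc t) mod 2) * 2 ^ (Suc k - 1 - Suc t)) = bitrev k (i div 2)"
    unfolding bitrev_def by (intro sum.cong) (auto simp: div_mult2_eq)
  finally show ?thesis by simp
qed

lemma bitrev_lt: "bitrev k i < 2 ^ k"
proof (induction k arbitrary: i)
  case 0 then show ?case by (simp add: bitrev_def)
next
  case (Suc k)
  have "i mod 2 \<le> 1" by simp
  then have "(i mod 2) * 2 ^ k \<le> 2 ^ k" by simp
  moreover have "bitrev k (i div 2) < 2 ^ k" by (rule Suc)
  ultimately show ?case unfolding bitrev_Suc power_Suc by linarith
qed

lemma bitrev_inj: "i < 2 ^ k \<Longrightarrow> j < 2 ^ k \<Longrightarrow> bitrev k i = bitrev k j \<Longrightarrow> i = j"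
proof (induction k arbitrary: i j)
  case 0 then show ?case by simp
next
  case (Suc k)
  let ?a = "i mod 2" and ?b = "j mod 2"
  have ha: "?a < 2" "?b < 2" by auto
  have e: "?a * 2 ^ k + bitrev k (i div 2) = ?b * 2 ^ k + bitrev k (j div 2)"
    using Suc.prems by (simp add: bitrev_Suc)
  have l1: "bitrev k (i div 2) < 2 ^ k" "bitrev k (j div 2) < 2 ^ k" by (rule bitrev_lt)+
  have "(?a * 2 ^ k + bitrev k (i div 2)) div 2 ^ k = ?a"
    using l1 by simp
  moreover have "(?b * 2 ^ k + bitrev k (j div 2)) div 2 ^ k = ?b"
    using l1 by simp
  ultimately have ab: "?a = ?b" using e by metis
  with e have "bitrev k (i div 2) = bitrev k (j div 2)" by simp
  moreover have "i div 2 < 2 ^ k" "j div 2 < 2 ^ k" using Suc.prems by auto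
  ultimately have "i div 2 = j div 2" using Suc.IH by blast
  with ab show ?case by (metis div_mult_mod_eq)
qed

lemma kron_diag: "m < 2 ^ k \<Longrightarrow> kronpow k m m = 1"
proof (induction k arbitrary: m)
  case 0 then show ?case by simp
next
  case (Suc k)
  have "m div 2 ^ k < 2" using Suc.prems by (simp add: less_mult_imp_div_less)
  then show ?case using Suc.IH[of "m mod 2 ^ k"] by (simp add: Fker_def)
qed

lemma kron_low: "l < m \<Longrightarrow> kronpow k l m = 0"
proof (induction k arbitrary: l m)
  case 0 then show ?case by simp
next
  case (Suc k)
  have "l div 2 ^ k \<le> m div 2 ^ k" using Suc.prems by (simp add: div_le_mono)
  show ?case
  proof (cases "l div 2 ^ k = m div 2 ^ k")
    case True
    then have "l mod 2 ^ k < m mod 2 ^ k" using Suc.prems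
      by (metis div_mult_mod_eq nat_add_left_cancel_less)
    then show ?thesis using Suc.IH by simp
  next
    case False
    with \<open>l div 2 ^ k \<le> m div 2 ^ k\<close> show ?thesis by (simp add: Fker_def)
  qed
qed

lemma kron_le1: "kronpow k l m \<le> 1"
  by (induction k arbitrary: l m) (auto simp: Fker_def)

lemma modcancel: "(a + R) mod q = (b + R) mod (q::nat) \<Longrightarrow> a < q \<Longrightarrow> b < q \<Longrightarrow> a = b"
proof -
  assume h: "(a + R) mod q = (b + R) mod q" and a: "a < q" and b: "b < q"
  define r where "r = R mod q"
  have r: "r < q" using a by (simp add: r_def)
  have h2: "(a + r) mod q = (b + r) mod q" using h unfolding r_def by (metis mod_add_right_eq)
  have ea: "(a + r) mod q = (if a + r < q then a + r else a + r - q)"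
    using a r by (simp add: mod_if)
  have eb: "(b + r) mod q = (if b + r < q then b + r else b + r - q)"
    using b r by (simp add: mod_if)
  show "a = b" using h2 ea eb a b r by (auto split: if_splits)
qed

lemma S_sum: "j < 2 ^ k \<Longrightarrow> (\<Sum>l<2 ^ k. S_BR k l (bitrev k j) * y l) = y j"
proof -
  assume j: "j < 2 ^ k"
  have "(\<Sum>l<2 ^ k. S_BR k l (bitrev k j) * y l) = (\<Sum>l<2 ^ k. if l = j then y l else 0)"
    using j bitrev_lt[of k j] bitrev_inj[of _ k j]
    by (intro sum.cong) (auto simp: S_BR_def)
  also have "\<dots> = y j" using j by simp
  finally show ?thesis .
qed

lemma S_sum2: "j < 2 ^ k \<Longrightarrow> (\<Sum>l<2 ^ k. y l * S_BR k l (bitrev k j)) = y j"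
  using S_sum[of j k y] by (simp add: mult.commute)

lemma T1: "j < 2 ^ k \<Longrightarrow> mulvec q (2 ^ k) (transp (S_BR k)) y (bitrev k j) = y j mod q"
  using bitrev_lt[of k j] by (simp add: mulvec_def transp_def S_sum)

lemma G_entry: "m < 2 ^ k \<Longrightarrow> l < 2 ^ k \<Longrightarrow> 2 \<le> q \<Longrightarrow> Gmat q k l (bitrev k m) = kronpow k l m"
proof -
  assume m: "m < 2 ^ k" and l: "l < 2 ^ k" and q: "2 \<le> q"
  have "kronpow k l m < q" using kron_le1[of k l m] q by linarith
  then show ?thesis using m l bitrev_lt[of k m]
    by (simp add: Gmat_def matmul_def S_sum2)
qed

lemma T2: "m < 2 ^ k \<Longrightarrow> 2 \<le> q \<Longrightarrow>
  mulvec q (2 ^ k) (transp (Gmat q k)) x (bitrev k m) = (\<Sum>l<2 ^ k. kronpow k l m * x l) mod q"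
  using bitrev_lt[of k m] by (simp add: mulvec_def transp_def G_entry)

lemma T3:
  assumes eq: "\<And>m. m < n \<Longrightarrow> (\<Sum>l<n. kronpow k l m * x l) mod q = (\<Sum>l<n. kronpow k l m * x' l) mod q"
    and x: "\<And>l. l < n \<Longrightarrow> x l < q" and x': "\<And>l. l < n \<Longrightarrow> x' l < q"
    and n: "n \<le> 2 ^ k"
  shows "m < n \<Longrightarrow> x m = x' m"
proof (induction "n - m" arbitrary: m rule: less_induct)
  case less
  have hi: "x l = x' l" if "m < l" "l < n" for l
    using less.hyps[of l] that by auto
  have km: "kronpow k m m = 1" using less.prems n kron_diag[of m k] by simp
  define R where "R = (\<Sum>l\<in>{..<n} - {m}. kronpow k l m * x l)"
  have R': "R = (\<Sum>l\<in>{..<n} - {m}. kronpow k l m * x' l)"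
    unfolding R_def
  proof (intro sum.cong refl)
    fix l assume "l \<in> {..<n} - {m}"
    then have "l < m \<or> (m < l \<and> l < n)" by auto
    then show "kronpow k l m * x l = kronpow k l m * x' l"
      using kron_low[of l m k] hi by auto
  qed
  have s1: "(\<Sum>l<n. kronpow k l m * x l) = x m + R"
    unfolding R_def using less.prems km by (subst sum.remove[of _ m]) auto
  have s2: "(\<Sum>l<n. kronpow k l m * x' l) = x' m + R"
    unfolding R' using less.prems km by (subst sum.remove[of _ m]) auto
  show ?case using eq[OF less.prems] s1 s2 modcancel x[OF less.prems] x'[OF less.prems] by metis
qed

lemma mulvec_lt: "0 < q \<Longrightarrow> mulvec q n M y j < q"
  by (simp add: mulvec_def)

lemma Tmap_inj:
  assumes q: "2 \<le> q" and x: "x \<in> vecs (2 ^ k) q" and x': "x' \<in> vecs (2 ^ k) q"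
    and eq: "Tmap q k x = Tmap q k x'"
  shows "x = x'"
proof -
  define y where "y = mulvec q (2 ^ k) (transp (Gmat q k)) x"
  define y' where "y' = mulvec q (2 ^ k) (transp (Gmat q k)) x'"
  have yy: "y j = y' j" if "j < 2 ^ k" for j
  proof -
    have "y j mod q = y' j mod q"
      using eq T1[OF that, of q y] T1[OF that, of q y'] unfolding Tmap_def y_def y'_def by metis
    moreover have "y j < q" "y' j < q" using q unfolding y_def y'_def by (auto intro!: mulvec_lt)
    ultimately show ?thesis by simp
  qed
  have "(\<Sum>l<2 ^ k. kronpow k l m * x l) mod q = (\<Sum>l<2 ^ k. kronpow k l m * x' l) mod q"
    if "m < 2 ^ k" for m
    using yy[OF bitrev_lt[of k m]] T2[OF that q, of x] T2[OF that q, of x'] unfolding y_def y'_def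
    by simp
  then have "x m = x' m" if "m < 2 ^ k" for m
    using T3[of "2 ^ k" k x q x' m] x x' that unfolding vecs_def by auto
  moreover have "x m = x' m" if "\<not> m < 2 ^ k" for m
    using x x' that unfolding vecs_def by auto
  ultimately show ?thesis by blast
qed




lemma sorted_nth_card:
  assumes fin: "finite I" and i: "i \<in> I"
  shows "card {j \<in> I. j < i} < length (sorted_list_of_set I)"
    and "sorted_list_of_set I ! card {j \<in> I. j < i} = (i::nat)"
proof -
  define xs where "xs = sorted_list_of_set I"
  have sx: "sorted_wrt (<) xs" and dx: "distinct xs" and setx: "set xs = I"
    using fin by (auto simp: xs_def)
  obtain t where t: "t < length xs" "xs ! t = i"
    using i setx by (metis in_set_conv_nth)
  have eqs: "{j \<in> I. j < i} = (\<lambda>l. xs ! l) ` {..<t}"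
  proof
    show "(\<lambda>l. xs ! l) ` {..<t} \<subseteq> {j \<in> I. j < i}"
    proof
      fix j assume "j \<in> (\<lambda>l. xs ! l) ` {..<t}"
      then obtain l where l: "l < t" "j = xs ! l" by auto
      then have "xs ! l < xs ! t" using sorted_wrt_nth_less[OF sx l(1) t(1)] by simp
      moreover have "xs ! l \<in> I" using l t setx by auto
      ultimately show "j \<in> {j \<in> I. j < i}" using l t by auto
    qed
  next
    show "{j \<in> I. j < i} \<subseteq> (\<lambda>l. xs ! l) ` {..<t}"
    proof
      fix j assume j: "j \<in> {j \<in> I. j < i}"
      then obtain l where l: "l < length xs" "xs ! l = j" using setx by (metis (no_types, lifting) in_set_conv_nth mem_Collect_eq)
      have "l < t"
      proof (rule ccontr)
        assume "\<not> l < t"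
        then have "t \<le> l" by simp
        then have "xs ! t \<le> xs ! l"
        proof (cases "t = l")
          case False
          then have "t < l" using \<open>t \<le> l\<close> by simp
          then show ?thesis using sorted_wrt_nth_less[OF sx _ l(1)] by (simp add: less_imp_le)
        qed simp
        then show False using j l t by auto
      qed
      then show "j \<in> (\<lambda>l. xs ! l) ` {..<t}" using l by auto
    qed
  qed
  have "inj_on (\<lambda>l. xs ! l) {..<t}"
    using dx t by (auto simp: inj_on_def nth_eq_iff_index_eq)
  then have "card {j \<in> I. j < i} = t" unfolding eqs by (simp add: card_image)
  then show "card {j \<in> I. j < i} < length (sorted_list_of_set I)"
    and "sorted_list_of_set I ! card {j \<in> I. j < i} = i"
    using t by (auto simp: xs_def)
qed

lemma restr_idem: "restr i (restr i c) = restr i c"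
  by (auto simp: restr_def)

lemma condC_restr: "condC q p k d i (restr i c) y = condC q p k d i c y"
  by (simp add: condC_def restr_idem)

definition errE :: "nat \<Rightarrow> (nat \<times> 'y) pmf \<Rightarrow> nat \<Rightarrow> real \<Rightarrow> nat pmf \<Rightarrow> nat \<Rightarrow> (nat \<Rightarrow> nat) \<Rightarrow> (nat \<Rightarrow> 'y) \<Rightarrow> ennreal" where
  "errE q p k \<beta> d j x y = (if j \<in> I1 q p k \<beta> then 0
     else emeasure (measure_pmf (condC q p k d j (Tmap q k x) y)) {w. w \<noteq> Tmap q k x j})"

lemma finite_I1: "finite (I1 q p k \<beta>)"
  by (simp add: I1_def)

lemma restr_upd: "((restr i c)(i := ci) = restr (Suc i) c) \<longleftrightarrow> ci = c i"
proof
  assume "(restr i c)(i := ci) = restr (Suc i) c"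
  then have "((restr i c)(i := ci)) i = restr (Suc i) c i" by simp
  then show "ci = c i" by (simp add: restr_def)
next
  assume "ci = c i"
  then show "(restr i c)(i := ci) = restr (Suc i) c" by (auto simp: restr_def)
qed

lemma lemmaA:
  "emeasure (measure_pmf (sscdec q p k \<beta> d (encA q p k \<beta> x) y i)) {ch. ch \<noteq> restr i (Tmap q k x)}
     \<le> (\<Sum>j<i. errE q p k \<beta> d j x y)"
proof (induction i)
  case 0
  have "restr 0 (Tmap q k x) = (\<lambda>_. 0)" by (simp add: restr_def)
  then show ?case by simp
next
  case (Suc i)
  define c where "c = Tmap q k x"
  define A where "A = sscdec q p k \<beta> d (encA q p k \<beta> x) y i"
  define G where "G = (\<lambda>a. if i \<in> I1 q p k \<beta> then return_pmf (encA q p k \<beta> x ! card {j \<in> I1 q p k \<beta>. j < i})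
          else condC q p k d i a y)"
  define B where "B = {a. a \<noteq> restr i c}"
  define e where "e = errE q p k \<beta> d i x y"
  have pt: "emeasure (measure_pmf (map_pmf (\<lambda>ci. a(i := ci)) (G a))) {ch. ch \<noteq> restr (Suc i) c}
      \<le> indicator B a + e" for a
  proof (cases "a = restr i c")
    case True
    have aup: "a(i := c i) = restr (Suc i) c" using True restr_upd[of i c] by simp
    have pre: "(\<lambda>ci. a(i := ci)) -` {ch. ch \<noteq> restr (Suc i) c} = {w. w \<noteq> c i}"
      using True restr_upd[of i c] by auto
    show ?thesis
    proof (cases "i \<in> I1 q p k \<beta>")
      case True
      have "encA q p k \<beta> x ! card {j \<in> I1 q p k \<beta>. j < i} = c i"
        using sorted_nth_card[OF finite_I1 True] unfolding encA_def c_def by simp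
      then show ?thesis using True pre aup by (simp add: G_def)
    next
      case False
      then have "G a = condC q p k d i c y" using \<open>a = restr i c\<close> by (simp add: G_def condC_restr)
      then show ?thesis using False pre by (simp add: e_def errE_def c_def)
    qed
  next
    case False
    then have "indicator B a = (1::ennreal)" by (simp add: B_def)
    then show ?thesis
      using measure_pmf.emeasure_le_1 by (metis add_increasing2 zero_le)
  qed
  have "emeasure (measure_pmf (sscdec q p k \<beta> d (encA q p k \<beta> x) y (Suc i))) {ch. ch \<noteq> restr (Suc i) c}
      = (\<integral>\<^sup>+a. emeasure (measure_pmf (map_pmf (\<lambda>ci. a(i := ci)) (G a))) {ch. ch \<noteq> restr (Suc i) c} \<partial>measure_pmf A)"
    by (simp add: A_def G_def emeasure_bind_pmf del: emeasure_map_pmf)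
  also have "\<dots> \<le> (\<integral>\<^sup>+a. indicator B a + e \<partial>measure_pmf A)"
    by (intro nn_integral_mono pt)
  also have "\<dots> = emeasure (measure_pmf A) B + e"
    by (subst nn_integral_add) (auto simp: measure_pmf.emeasure_space_1)
  also have "\<dots> \<le> (\<Sum>j<i. errE q p k \<beta> d j x y) + e"
    using Suc.IH by (simp add: A_def B_def c_def add_right_mono)
  also have "\<dots> = (\<Sum>j<Suc i. errE q p k \<beta> d j x y)" by (simp add: e_def)
  finally show ?case by (simp add: c_def)
qed




lemma L_R: "(\<integral>\<^sup>+z. (if fst z = u then F (snd z) else 0) \<partial>count_space UNIV) = (\<integral>\<^sup>+v. F v \<partial>count_space UNIV)"
proof -
  have "(\<integral>\<^sup>+z. (if fst z = u then F (snd z) else 0) \<partial>count_space UNIV)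
      = (\<integral>\<^sup>+z. F (snd z) * indicator (range (Pair u)) z \<partial>count_space UNIV)"
    by (intro nn_integral_cong) (auto simp: indicator_def image_iff)
  also have "\<dots> = (\<integral>\<^sup>+z. F (snd z) \<partial>count_space (range (Pair u)))"
    by (subst nn_integral_count_space_indicator) auto
  also have "\<dots> = (\<integral>\<^sup>+v. F (snd (Pair u v)) \<partial>count_space UNIV)"
    by (rule nn_integral_bij_count_space[symmetric]) (auto simp: bij_betw_def inj_on_def)
  finally show ?thesis by simp
qed

lemma L_fin: "(\<integral>\<^sup>+v. ennreal (pmf J (u, v)) \<partial>count_space UNIV) \<le> 1"
proof -
  have "(\<integral>\<^sup>+v. ennreal (pmf J (u, v)) \<partial>count_space UNIV)
     = (\<integral>\<^sup>+z. (if fst z = u then ennreal (pmf J (u, snd z)) else 0) \<partial>count_space UNIV)"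
    by (rule L_R[symmetric])
  also have "\<dots> \<le> (\<integral>\<^sup>+z. ennreal (pmf J z) \<partial>count_space UNIV)"
    by (intro nn_integral_mono) (auto simp: prod_eq_iff)
  also have "\<dots> = 1" by (simp add: nn_integral_pmf measure_pmf.emeasure_space_1[simplified])
  finally show ?thesis .
qed

lemma sqrt_le_sum: "0 \<le> a \<Longrightarrow> 0 \<le> b \<Longrightarrow> sqrt (a * b) \<le> a + (b::real)"
proof -
  assume a: "0 \<le> a" and b: "0 \<le> b"
  have "a * b \<le> (a + b)\<^sup>2" using a b by (simp add: power2_eq_square algebra_simps)
  then have "sqrt (a * b) \<le> sqrt ((a + b)\<^sup>2)" by (rule real_sqrt_le_mono)
  then show ?thesis using a b by simp
qed

lemma L_conv: "(\<integral>\<^sup>+v. ennreal (sqrt (pmf J (u, v) * pmf J (u', v))) \<partial>count_space UNIV)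
    = ennreal (infsum (\<lambda>v. sqrt (pmf J (u, v) * pmf J (u', v))) UNIV)"
proof -
  define F where "F = (\<lambda>v. sqrt (pmf J (u, v) * pmf J (u', v)))"
  have "(\<integral>\<^sup>+v. ennreal (F v) \<partial>count_space UNIV)
      \<le> (\<integral>\<^sup>+v. ennreal (pmf J (u, v)) + ennreal (pmf J (u', v)) \<partial>count_space UNIV)"
    by (intro nn_integral_mono) (simp add: F_def sqrt_le_sum flip: ennreal_plus)
  also have "\<dots> = (\<integral>\<^sup>+v. ennreal (pmf J (u, v)) \<partial>count_space UNIV) + (\<integral>\<^sup>+v. ennreal (pmf J (u', v)) \<partial>count_space UNIV)"
    by (rule nn_integral_add) auto
  also have "\<dots> \<le> 1 + 1" by (intro add_mono L_fin)
  finally have le: "(\<integral>\<^sup>+v. ennreal (F v) \<partial>count_space UNIV) \<le> 1 + 1" .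
  have fin: "(\<integral>\<^sup>+v. ennreal (F v) \<partial>count_space UNIV) < \<infinity>"
    using le by (rule order.strict_trans1) simp
  have nn: "\<And>v. 0 \<le> F v" by (simp add: F_def)
  have int: "integrable (count_space UNIV) F"
    by (rule integrableI_nonneg) (use fin nn in auto)
  then have abs: "Infinite_Set_Sum.abs_summable_on F UNIV" by (simp add: Infinite_Set_Sum.abs_summable_on_def)
  have "(\<integral>\<^sup>+v. ennreal (F v) \<partial>count_space UNIV) = ennreal (infsetsum F UNIV)"
    using nn_integral_conv_infsetsum[OF abs] nn by simp
  also have "infsetsum F UNIV = infsum F UNIV" by (rule infsetsum_infsum[OF abs])
  finally show ?thesis by (simp add: F_def)
qed




lemma real_ineq: "0 \<le> a \<Longrightarrow> a \<le> P \<Longrightarrow> 0 \<le> b \<Longrightarrow> b \<le> P \<Longrightarrow> 0 < (P::real) \<Longrightarrow> a * b / P \<le> sqrt (a * b)"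
proof -
  assume a: "0 \<le> a" "a \<le> P" and b: "0 \<le> b" "b \<le> P" and P: "0 < P"
  define s where "s = sqrt (a * b)"
  have s0: "0 \<le> s" using a b by (simp add: s_def)
  have "a * b \<le> P * P" using a b by (intro mult_mono) simp_all
  then have "s \<le> sqrt (P * P)" unfolding s_def by (rule real_sqrt_le_mono)
  then have sP: "s \<le> P" using P by simp
  have ab: "a * b = s * s" using a b by (simp add: s_def)
  have "s * s \<le> s * P" using sP s0 by (rule mult_left_mono)
  then have "s * s / P \<le> s" by (simp only: pos_divide_le_eq[OF P])
  then have "a * b / P \<le> s" by (simp only: ab)
  then show ?thesis by (simp only: s_def)
qed

lemma double_delta:
  assumes "u < (q::nat)"
  shows "(\<Sum>u''<q. \<Sum>u'\<in>{..<q} - {u''}. (if u = u'' then X u'' u' else 0)) = (\<Sum>u'\<in>{..<q} - {u}. X u u')"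
proof -
  have "(\<Sum>u''<q. \<Sum>u'\<in>{..<q} - {u''}. (if u = u'' then X u'' u' else 0))
      = (\<Sum>u''<q. if u = u'' then (\<Sum>u'\<in>{..<q} - {u''}. X u'' u') else 0)"
    by (intro sum.cong) auto
  also have "\<dots> = (\<Sum>u'\<in>{..<q} - {u}. X u u')" using assms by (subst sum.delta') auto
  finally show ?thesis .
qed

lemma L_pt:
  fixes J :: "(nat \<times> 'v) pmf"
  assumes supp: "\<And>z. z \<in> set_pmf J \<Longrightarrow> fst z < q"
  shows "ennreal (pmf J z) * emeasure (measure_pmf (if measure_pmf.prob J {z'. snd z' = snd z} = 0 then d
            else map_pmf fst (cond_pmf J {z'. snd z' = snd z}))) {w. w \<noteq> fst z}
   \<le> (\<Sum>u<q. \<Sum>u'\<in>{..<q}-{u}. (if fst z = u then ennreal (sqrt (pmf J (u, snd z) * pmf J (u', snd z))) else 0))"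
proof -
  obtain u v where z: "z = (u, v)" by (cases z)
  show ?thesis
  proof (cases "pmf J z = 0")
    case True then show ?thesis by simp
  next
    case False
    then have zin: "z \<in> set_pmf J" by (simp add: set_pmf_iff)
    then have uq: "u < q" using supp z by auto
    define E where "E = {z'::nat \<times> 'v. snd z' = v}"
    define P where "P = measure_pmf.prob J E"
    define a where "a = pmf J z"
    have zE: "z \<in> E" by (simp add: E_def z)
    have P0: "0 < P" unfolding P_def using measure_pmf_posI[OF zin zE] .
    have ne: "set_pmf J \<inter> E \<noteq> {}" using zin zE by blast
    have aP: "a \<le> P" unfolding a_def P_def
      using measure_pmf.finite_measure_mono[of "{z}" E J] zE by (simp add: measure_pmf_single)
    have bP: "pmf J (u', v) \<le> P" for u'
      using measure_pmf.finite_measure_mono[of "{(u', v)}" E J] by (simp add: measure_pmf_single E_def P_def)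
    define Bset where "Bset = (\<lambda>u'. (u', v)) ` ({..<q} - {u})"
    have eqset: "(E \<inter> {z'. fst z' \<noteq> u}) \<inter> set_pmf J = Bset \<inter> set_pmf J"
    proof (intro equalityI subsetI)
      fix x assume x: "x \<in> (E \<inter> {z'. fst z' \<noteq> u}) \<inter> set_pmf J"
      obtain a b where ab: "x = (a, b)" by (cases x)
      have "a < q" using supp[of x] x ab by auto
      then show "x \<in> Bset \<inter> set_pmf J" using x ab by (auto simp: E_def Bset_def)
    next
      fix x assume x: "x \<in> Bset \<inter> set_pmf J"
      then show "x \<in> (E \<inter> {z'. fst z' \<noteq> u}) \<inter> set_pmf J" by (auto simp: E_def Bset_def)
    qed
    define S where "S = (\<Sum>u'\<in>{..<q} - {u}. pmf J (u', v))"
    have mS: "measure_pmf.prob J (E \<inter> {z'. fst z' \<noteq> u}) = S"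
    proof -
      have "measure_pmf.prob J (E \<inter> {z'. fst z' \<noteq> u}) = measure_pmf.prob J (Bset \<inter> set_pmf J)"
        by (metis eqset measure_Int_set_pmf)
      also have "\<dots> = measure_pmf.prob J Bset" by (rule measure_Int_set_pmf)
      also have "\<dots> = sum (pmf J) Bset" by (rule measure_measure_pmf_finite) (simp add: Bset_def)
      also have "\<dots> = S" unfolding Bset_def S_def by (subst sum.reindex) (auto simp: inj_on_def)
      finally show ?thesis .
    qed
    have S0: "0 \<le> S" by (simp add: S_def sum_nonneg)
    have cond: "(if measure_pmf.prob J E = 0 then d else map_pmf fst (cond_pmf J E)) = map_pmf fst (cond_pmf J E)"
      using P0 by (simp add: P_def)
    have "emeasure (measure_pmf (map_pmf fst (cond_pmf J E))) {w. w \<noteq> u}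
        = emeasure (measure_pmf (cond_pmf J E)) {z'. fst z' \<noteq> u}"
      by (simp add: vimage_def)
    also have "\<dots> = emeasure (measure_pmf J) (E \<inter> {z'. fst z' \<noteq> u}) / emeasure (measure_pmf J) E"
      by (simp add: cond_pmf.rep_eq[OF ne])
    also have "\<dots> = ennreal (S / P)"
      using mS S0 P0 by (simp add: measure_pmf.emeasure_eq_measure P_def divide_ennreal)
    finally have em: "emeasure (measure_pmf (map_pmf fst (cond_pmf J E))) {w. w \<noteq> u} = ennreal (S / P)" .
    have zz: "snd z = v" "fst z = u" by (simp_all add: z)
    have EE: "{z'. snd z' = snd z} = E" by (simp add: E_def zz)
    have lhs: "ennreal (pmf J z) * emeasure (measure_pmf (if measure_pmf.prob J {z'. snd z' = snd z} = 0 then d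
            else map_pmf fst (cond_pmf J {z'. snd z' = snd z}))) {w. w \<noteq> fst z} = ennreal (a * (S / P))"
    proof -
      have "ennreal (pmf J z) * emeasure (measure_pmf (if measure_pmf.prob J {z'. snd z' = snd z} = 0 then d
            else map_pmf fst (cond_pmf J {z'. snd z' = snd z}))) {w. w \<noteq> fst z}
          = ennreal a * ennreal (S / P)"
        unfolding EE cond zz(2) em a_def ..
      also have "\<dots> = ennreal (a * (S / P))"
        by (rule ennreal_mult''[symmetric]) (use S0 P0 in simp)
      finally show ?thesis .
    qed
    have "a * (S / P) = (\<Sum>u'\<in>{..<q} - {u}. a * pmf J (u', v) / P)"
      by (simp add: S_def sum_distrib_left sum_divide_distrib)
    also have "\<dots> \<le> (\<Sum>u'\<in>{..<q} - {u}. sqrt (a * pmf J (u', v)))"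
      using aP bP P0 by (intro sum_mono real_ineq) (auto simp: a_def)
    finally have ineq: "a * (S / P) \<le> (\<Sum>u'\<in>{..<q} - {u}. sqrt (a * pmf J (u', v)))" .
    have rhs: "(\<Sum>u<q. \<Sum>u'\<in>{..<q}-{u}. (if fst z = u then ennreal (sqrt (pmf J (u, snd z) * pmf J (u', snd z))) else 0))
        = ennreal (\<Sum>u'\<in>{..<q} - {u}. sqrt (a * pmf J (u', v)))"
      unfolding zz using double_delta[OF uq, of "\<lambda>u u'. ennreal (sqrt (pmf J (u, v) * pmf J (u', v)))"]
      by (simp add: z a_def)
    show ?thesis unfolding lhs rhs by (rule ennreal_leI[OF ineq])
  qed
qed




lemma B_gen:
  fixes J :: "(nat \<times> 'v) pmf"
  assumes supp: "\<And>z. z \<in> set_pmf J \<Longrightarrow> fst z < q"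
  shows "(\<integral>\<^sup>+z. emeasure (measure_pmf (if measure_pmf.prob J {z'. snd z' = snd z} = 0 then d
            else map_pmf fst (cond_pmf J {z'. snd z' = snd z}))) {w. w \<noteq> fst z} \<partial>measure_pmf J)
    \<le> ennreal (\<Sum>u<q. \<Sum>u'\<in>{..<q}-{u}. infsum (\<lambda>v. sqrt (pmf J (u, v) * pmf J (u', v))) UNIV)"
proof -
  define phi where "phi = (\<lambda>z. emeasure (measure_pmf (if measure_pmf.prob J {z'. snd z' = snd z} = 0 then d
            else map_pmf fst (cond_pmf J {z'. snd z' = snd z}))) {w. w \<noteq> fst z})"
  have "(\<integral>\<^sup>+z. phi z \<partial>measure_pmf J) = (\<integral>\<^sup>+z. ennreal (pmf J z) * phi z \<partial>count_space UNIV)"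
    by (rule nn_integral_measure_pmf)
  also have "\<dots> \<le> (\<integral>\<^sup>+z. (\<Sum>u<q. \<Sum>u'\<in>{..<q}-{u}. (if fst z = u then ennreal (sqrt (pmf J (u, snd z) * pmf J (u', snd z))) else 0)) \<partial>count_space UNIV)"
    unfolding phi_def by (intro nn_integral_mono L_pt supp)
  also have "\<dots> = (\<Sum>u<q. \<Sum>u'\<in>{..<q}-{u}. (\<integral>\<^sup>+z. (if fst z = u then ennreal (sqrt (pmf J (u, snd z) * pmf J (u', snd z))) else 0) \<partial>count_space UNIV))"
    by (subst nn_integral_sum) (auto intro!: sum.cong nn_integral_sum)
  also have "\<dots> = (\<Sum>u<q. \<Sum>u'\<in>{..<q}-{u}. (\<integral>\<^sup>+v. ennreal (sqrt (pmf J (u, v) * pmf J (u', v))) \<partial>count_space UNIV))"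
    by (intro sum.cong refl) (rule L_R)
  also have "\<dots> = (\<Sum>u<q. \<Sum>u'\<in>{..<q}-{u}. ennreal (infsum (\<lambda>v. sqrt (pmf J (u, v) * pmf J (u', v))) UNIV))"
    by (intro sum.cong refl) (rule L_conv)
  also have "\<dots> = ennreal (\<Sum>u<q. \<Sum>u'\<in>{..<q}-{u}. infsum (\<lambda>v. sqrt (pmf J (u, v) * pmf J (u', v))) UNIV)"
    by (simp add: infsum_nonneg sum_nonneg)
  finally show ?thesis unfolding phi_def .
qed

lemma CiV_supp: "0 < q \<Longrightarrow> z \<in> set_pmf (CiV q p k j) \<Longrightarrow> fst z < q"
  by (auto simp: CiV_def Tmap_def mulvec_lt Let_def)

lemma errE_int:
  fixes p :: "(nat \<times> 'y) pmf"
  assumes "j \<notin> I1 q p k \<beta>" "0 < q"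
  shows "(\<integral>\<^sup>+xy. errE q p k \<beta> d j (fst xy) (snd xy) \<partial>measure_pmf (XYn p (2 ^ k)))
    \<le> ennreal (\<Sum>u<q. \<Sum>u'\<in>{..<q}-{u}. infsum (\<lambda>v. sqrt (pmf (CiV q p k j) (u, v) * pmf (CiV q p k j) (u', v))) UNIV)"
proof -
  define J where "J = CiV q p k j"
  define phi where "phi = (\<lambda>z. emeasure (measure_pmf (if measure_pmf.prob J {z'. snd z' = snd z} = 0 then d
            else map_pmf fst (cond_pmf J {z'. snd z' = snd z}))) {w. w \<noteq> fst z})"
  define g where "g = (\<lambda>(x, y::nat \<Rightarrow> 'y). let c = Tmap q k x in (c j, (restr j c, y)))"
  have J: "J = map_pmf g (XYn p (2 ^ k))" by (simp add: J_def g_def CiV_def)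
  have "errE q p k \<beta> d j (fst xy) (snd xy) = phi (g xy)" for xy
    using assms(1) by (cases xy) (simp add: errE_def phi_def g_def condC_def Let_def J_def)
  then have "(\<integral>\<^sup>+xy. errE q p k \<beta> d j (fst xy) (snd xy) \<partial>measure_pmf (XYn p (2 ^ k)))
      = (\<integral>\<^sup>+z. phi z \<partial>measure_pmf J)" by (simp add: J)
  also have "\<dots> \<le> ennreal (\<Sum>u<q. \<Sum>u'\<in>{..<q}-{u}. infsum (\<lambda>v. sqrt (pmf J (u, v) * pmf J (u', v))) UNIV)"
    unfolding phi_def by (rule B_gen) (use CiV_supp[OF assms(2)] in \<open>simp add: J_def\<close>)
  finally show ?thesis by (simp add: J_def)
qed




lemma XYn_vecs:
  assumes "fst ` set_pmf p \<subseteq> {..<q}" "xy \<in> set_pmf (XYn p n)"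
  shows "fst xy \<in> vecs n q"
proof -
  obtain f where f: "f \<in> set_pmf (Pi_pmf {..<n} undefined (\<lambda>_. p))"
    and xy: "xy = (\<lambda>f. (\<lambda>i. if i < n then fst (f i) else 0, \<lambda>i. snd (f i))) f"
    using assms(2) by (auto simp: XYn_def)
  have "f i \<in> set_pmf p" if "i < n" for i
    using f that by (simp add: set_Pi_pmf PiE_dflt_def)
  then show ?thesis using assms(1) by (auto simp: xy vecs_def)
qed

lemma Tmap_high: "2 ^ k \<le> j \<Longrightarrow> Tmap q k x j = 0"
  by (simp add: Tmap_def mulvec_def)

lemma restr_Tmap: "restr (2 ^ k) (Tmap q k x) = Tmap q k x"
  by (auto simp: restr_def Tmap_high)

lemma Tinv_Tmap: "2 \<le> q \<Longrightarrow> x \<in> vecs (2 ^ k) q \<Longrightarrow> Tinv q k (Tmap q k x) = x"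
  unfolding Tinv_def by (rule inv_into_f_f) (auto simp: inj_on_def intro: Tmap_inj)

lemma Perr_bound:
  fixes p :: "(nat \<times> 'y) pmf"
  assumes q: "2 \<le> q" and supp: "fst ` set_pmf p \<subseteq> {..<q}"
  shows "Perr q p k \<beta> d \<le> real (2 ^ k) * ((real q - 1) * 2 powr (- (real (2 ^ k) powr \<beta>)))"
proof -
  define D where "D = XYn p (2 ^ k)"
  define B0 where "B0 = (real q - 1) * 2 powr (- (real (2 ^ k) powr \<beta>))"
  have B0: "0 \<le> B0" using q by (simp add: B0_def)
  define Err where "Err = {(x, xh). xh \<noteq> (x :: nat \<Rightarrow> nat)}"
  have pt: "emeasure (measure_pmf (map_pmf (\<lambda>xh. (x, xh)) (Psi q p k \<beta> d (encA q p k \<beta> x) y))) Err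
      \<le> (\<Sum>j<2 ^ k. errE q p k \<beta> d j x y)" if xy: "(x, y) \<in> set_pmf D" for x y
  proof -
    have xv: "x \<in> vecs (2 ^ k) q" using XYn_vecs[OF supp xy[unfolded D_def]] by simp
    have "emeasure (measure_pmf (map_pmf (\<lambda>xh. (x, xh)) (Psi q p k \<beta> d (encA q p k \<beta> x) y))) Err
        = emeasure (measure_pmf (sscdec q p k \<beta> d (encA q p k \<beta> x) y (2 ^ k))) {ch. Tinv q k ch \<noteq> x}"
      by (simp add: Psi_def Err_def vimage_def)
    also have "\<dots> \<le> emeasure (measure_pmf (sscdec q p k \<beta> d (encA q p k \<beta> x) y (2 ^ k))) {ch. ch \<noteq> restr (2 ^ k) (Tmap q k x)}"
      by (rule emeasure_mono) (auto simp: restr_Tmap Tinv_Tmap[OF q xv])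
    also have "\<dots> \<le> (\<Sum>j<2 ^ k. errE q p k \<beta> d j x y)" by (rule lemmaA)
    finally show ?thesis .
  qed
  have ij: "(\<integral>\<^sup>+xy. errE q p k \<beta> d j (fst xy) (snd xy) \<partial>measure_pmf D) \<le> ennreal B0" if j: "j < 2 ^ k" for j
  proof (cases "j \<in> I1 q p k \<beta>")
    case True then show ?thesis by (simp add: errE_def)
  next
    case False
    then have jI0: "j \<in> I0 q p k \<beta>" using j by (simp add: I1_def)
    let ?J = "CiV q p k j"
    let ?S = "(\<Sum>u<q. \<Sum>u'\<in>{..<q}-{u}. infsum (\<lambda>v. sqrt (pmf ?J (u, v) * pmf ?J (u', v))) UNIV)"
    have "?S = (real q - 1) * Zbhat q ?J" using q by (simp add: Zbhat_def)
    also have "\<dots> \<le> B0" unfolding B0_def using jI0 q by (intro mult_left_mono) (auto simp: I0_def)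
    finally have "?S \<le> B0" .
    moreover have "0 < q" using q by simp
    ultimately show ?thesis
      using errE_int[OF False, where d=d] unfolding D_def
      by (meson ennreal_leI order.trans)
  qed
  have "ennreal (Perr q p k \<beta> d) = emeasure (measure_pmf (bind_pmf D (\<lambda>(x, y).
        map_pmf (\<lambda>xh. (x, xh)) (Psi q p k \<beta> d (encA q p k \<beta> x) y)))) Err"
    by (simp add: Perr_def D_def Err_def measure_pmf.emeasure_eq_measure)
  also have "\<dots> = (\<integral>\<^sup>+xy. emeasure (measure_pmf ((\<lambda>(x, y).
        map_pmf (\<lambda>xh. (x, xh)) (Psi q p k \<beta> d (encA q p k \<beta> x) y)) xy)) Err \<partial>measure_pmf D)"
    by (simp only: emeasure_bind_pmf)
  also have "\<dots> \<le> (\<integral>\<^sup>+xy. (\<Sum>j<2 ^ k. errE q p k \<beta> d j (fst xy) (snd xy)) \<partial>measure_pmf D)"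
    by (intro nn_integral_mono_AE AE_pmfI) (use pt in auto)
  also have "\<dots> = (\<Sum>j<2 ^ k. (\<integral>\<^sup>+xy. errE q p k \<beta> d j (fst xy) (snd xy) \<partial>measure_pmf D))"
    by (rule nn_integral_sum) simp
  also have "\<dots> \<le> (\<Sum>j<(2::nat) ^ k. ennreal B0)"
    by (intro sum_mono ij) simp
  also have "\<dots> = ennreal (real (2 ^ k) * B0)"
    using B0 by (simp add: ennreal_mult'' ennreal_power[symmetric])
  finally have "ennreal (Perr q p k \<beta> d) \<le> ennreal (real (2 ^ k) * B0)" .
  then show ?thesis using B0 by (simp add: B0_def ennreal_le_iff)
qed

lemma g_lim:
  assumes "0 < (\<beta>::real)"
  shows "((\<lambda>x::real. x * 2 powr (- (x powr \<beta>))) \<longlongrightarrow> 0) at_top"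
  using assms by real_asymp

lemma pow2_at_top: "filterlim (\<lambda>k::nat. real (2 ^ k)) at_top sequentially"
proof (rule filterlim_at_top_mono[OF filterlim_real_sequentially])
  show "\<forall>\<^sub>F x in sequentially. real x \<le> real (2 ^ x)"
    by (intro always_eventually allI) (simp add: less_imp_le)
qed

theorem theorem4:
  fixes q :: nat and p :: "(nat \<times> 'y) pmf" and \<beta> :: real and d :: "nat pmf"
  assumes "prime q"
    and "fst ` set_pmf p \<subseteq> {..<q}"
    and "0 < \<beta>" and "\<beta> < 1 / 2"
  shows "(\<forall>k \<ge> 1. Perr q p k \<beta> d
            \<le> (real q - 1) / log (real q) 2 * real (2 ^ k) * 2 powr (- (real (2 ^ k) powr \<beta>)))
       \<and> (\<lambda>k. Perr q p k \<beta> d) \<longlonglongrightarrow> 0"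
proof -
  have q: "2 \<le> q" using assms(1) by (simp add: prime_ge_2_nat)
  define L where "L = log (real q) 2"
  have L0: "0 < L" using q by (simp add: L_def)
  have L1: "L \<le> 1"
  proof -
    have "log (real q) 2 \<le> log (real q) (real q)" using q by (subst log_le_cancel_iff) auto
    then show ?thesis using q by (simp add: L_def)
  qed
  define C where "C = (real q - 1) / L"
  have qC: "real q - 1 \<le> C" unfolding C_def using L0 L1 q
    by (simp add: le_divide_eq mult_left_le)
  have bnd: "Perr q p k \<beta> d \<le> C * (real (2 ^ k) * 2 powr (- (real (2 ^ k) powr \<beta>)))" for k
  proof -
    have "Perr q p k \<beta> d \<le> real (2 ^ k) * ((real q - 1) * 2 powr (- (real (2 ^ k) powr \<beta>)))"
      by (rule Perr_bound[OF q assms(2)])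
    also have "\<dots> = (real q - 1) * (real (2 ^ k) * 2 powr (- (real (2 ^ k) powr \<beta>)))" by simp
    also have "\<dots> \<le> C * (real (2 ^ k) * 2 powr (- (real (2 ^ k) powr \<beta>)))"
      using qC by (intro mult_right_mono) auto
    finally show ?thesis .
  qed
  have part1: "\<forall>k \<ge> 1. Perr q p k \<beta> d
            \<le> (real q - 1) / log (real q) 2 * real (2 ^ k) * 2 powr (- (real (2 ^ k) powr \<beta>))"
    using bnd by (simp add: C_def L_def mult.assoc)
  have lim: "(\<lambda>k. C * (real (2 ^ k) * 2 powr (- (real (2 ^ k) powr \<beta>)))) \<longlonglongrightarrow> C * 0"
    by (intro tendsto_mult tendsto_const filterlim_compose[OF g_lim[OF assms(3)] pow2_at_top])
  have "(\<lambda>k. Perr q p k \<beta> d) \<longlonglongrightarrow> 0"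
  proof (rule tendsto_sandwich[of "\<lambda>k. 0" _ _ "\<lambda>k. C * (real (2 ^ k) * 2 powr (- (real (2 ^ k) powr \<beta>)))"])
    show "\<forall>\<^sub>F k in sequentially. 0 \<le> Perr q p k \<beta> d"
      by (simp add: Perr_def)
    show "\<forall>\<^sub>F k in sequentially. Perr q p k \<beta> d \<le> C * (real (2 ^ k) * 2 powr (- (real (2 ^ k) powr \<beta>)))"
      using bnd by simp
  qed (use lim in auto)
  with part1 show ?thesis by blast
qed


end
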